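(* Let $M_G$ be a connected mixed graph such that $N(M_G)$ has rank $2$. Then $M_G$ is switching equivalent to every connected mixed graph that is cospectral with $M_G$.
   Context: A mixed graph $M_G$ is obtained from a finite simple graph $G$ by orienting the edges of some subset of $E(G)$; it is connected if $G$ is. With $\omega=\frac{1+\mathbf{i}\sqrt3}{2}$, $N(M_G)$ has $(u,v)$-entry $\omega$ if $\overrightarrow{uv}$ is an arc, $\bar\omega$ if $\overrightarrow{vu}$ is an arc, $1$ for an undirected edge, $0$ otherwise; cospectral means the matrices $N$ have the same multiset of eigenvalues. Mixed graphs are considered up to isomorphism. $\mathbb{T}_6=\{1,-1,\omega,\bar\omega,-\omega,-\bar\omega\}$. Given a partition $V(M_G)=\bigcup_{j\in\mathbb{T}_6}V_j$ into six possibly empty sets, an edge or arc $xy$ has type $(j,k)$ if $x\in V_j,y\in V_k$ (arcs directed from $x$ to $y$). The partition is admissible if every undirected edge has type $(j,j)$ or $(j,\omega j)$, and every arc has type $(j,j)$, $(j,\bar\omega j)$ or $(j,-\omega j)$, for some $j$. A three-way switching w.r.t. an admissible partition replaces each undirected edge of type $(j,\omega j)$ by an arc from $V_j$ to $V_{\omega j}$, replaces each arc of type $(j,\bar\omega j)$ by an undirected edge, and reverses each arc of type $(j,-\omega j)$. The converse of a mixed graph reverses all arcs. Two mixed graphs are switching equivalent if one is obtained from the other by a sequence of three-way switchings and taking converses. *)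

theory Defs
  imports "Jordan_Normal_Form.Char_Poly" "Jordan_Normal_Form.DL_Rank"
begin

text \<open>A mixed graph on the vertex set {0..<nv}: a symmetric irreflexive set of ordered
  pairs representing the undirected edges (each undirected edge {u,v} is stored as both
  (u,v) and (v,u)), and a set of arcs (u,v) meaning the arc from u to v.\<close>

record mgraph =
  nv  :: nat
  und :: "(nat \<times> nat) set"
  arc :: "(nat \<times> nat) set"

definition mixed_graph :: "mgraph \<Rightarrow> bool" where
  "mixed_graph G \<longleftrightarrow>
     und G \<subseteq> {..<nv G} \<times> {..<nv G} \<and> arc G \<subseteq> {..<nv G} \<times> {..<nv G} \<and>
     (\<forall>x y. (x,y) \<in> und G \<longrightarrow> (y,x) \<in> und G \<and> x \<noteq> y) \<and>
     (\<forall>x y. (x,y) \<in> arc G \<longrightarrow> x \<noteq> y \<and> (y,x) \<notin> arc G \<and> (x,y) \<notin> und G)"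

definition underlying_adj :: "mgraph \<Rightarrow> nat \<Rightarrow> nat \<Rightarrow> bool" where
  "underlying_adj G x y \<longleftrightarrow> (x,y) \<in> und G \<or> (x,y) \<in> arc G \<or> (y,x) \<in> arc G"

definition connected_mg :: "mgraph \<Rightarrow> bool" where
  "connected_mg G \<longleftrightarrow> (\<forall>x<nv G. \<forall>y<nv G. (underlying_adj G)\<^sup>*\<^sup>* x y)"

definition omega :: complex where
  "omega = (1 + \<i> * complex_of_real (sqrt 3)) / 2"

definition Nmat :: "mgraph \<Rightarrow> complex mat" where
  "Nmat G = mat (nv G) (nv G) (\<lambda>(u,v).
     if (u,v) \<in> arc G then omega
     else if (v,u) \<in> arc G then cnj omega
     else if (u,v) \<in> und G then 1 else 0)"

definition eigenvalue_mset :: "complex mat \<Rightarrow> complex multiset" where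
  "eigenvalue_mset A = proots (char_poly A)"

definition cospectral :: "mgraph \<Rightarrow> mgraph \<Rightarrow> bool" where
  "cospectral G H \<longleftrightarrow> eigenvalue_mset (Nmat G) = eigenvalue_mset (Nmat H)"

definition rank_N :: "mgraph \<Rightarrow> nat" where
  "rank_N G = vec_space.rank (nv G) (Nmat G)"

definition T6 :: "complex set" where
  "T6 = {1, -1, omega, cnj omega, - omega, - cnj omega}"

text \<open>A partition of the vertex set into V_j (j in T6) is given by the map p with x in V_(p x).\<close>
definition admissible :: "mgraph \<Rightarrow> (nat \<Rightarrow> complex) \<Rightarrow> bool" where
  "admissible G p \<longleftrightarrow>
     (\<forall>x<nv G. p x \<in> T6) \<and>
     (\<forall>(x,y)\<in>und G. p y = p x \<or> p y = omega * p x \<or> p x = omega * p y) \<and>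
     (\<forall>(x,y)\<in>arc G. p y = p x \<or> p y = cnj omega * p x \<or> p y = - omega * p x)"

definition three_way_switch :: "mgraph \<Rightarrow> (nat \<Rightarrow> complex) \<Rightarrow> mgraph" where
  "three_way_switch G p =
     \<lparr> nv = nv G,
       und = {(x,y). (x,y) \<in> und G \<and> p y = p x}
             \<union> {(x,y). (x,y) \<in> arc G \<and> p y = cnj omega * p x}
             \<union> {(y,x). (x,y) \<in> arc G \<and> p y = cnj omega * p x},
       arc = {(x,y). (x,y) \<in> arc G \<and> p y = p x}
             \<union> {(x,y). (x,y) \<in> und G \<and> p y = omega * p x}
             \<union> {(y,x). (x,y) \<in> arc G \<and> p y = - omega * p x} \<rparr>"

definition converse_mg :: "mgraph \<Rightarrow> mgraph" where
  "converse_mg G = \<lparr> nv = nv G, und = und G, arc = {(y,x). (x,y) \<in> arc G} \<rparr>"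

definition isomorphic_mg :: "mgraph \<Rightarrow> mgraph \<Rightarrow> bool" where
  "isomorphic_mg G H \<longleftrightarrow> nv G = nv H \<and>
     (\<exists>f. bij_betw f {..<nv G} {..<nv H} \<and>
          (\<forall>x<nv G. \<forall>y<nv G. ((x,y) \<in> und G \<longleftrightarrow> (f x, f y) \<in> und H) \<and>
                               ((x,y) \<in> arc G \<longleftrightarrow> (f x, f y) \<in> arc H)))"

text \<open>One step: isomorphism (graphs are considered up to isomorphism), a three-way
  switching w.r.t. an admissible partition, or taking the converse.\<close>
definition switch_step :: "mgraph \<Rightarrow> mgraph \<Rightarrow> bool" where
  "switch_step G H \<longleftrightarrow> isomorphic_mg G H \<or>
     (\<exists>p. admissible G p \<and> H = three_way_switch G p) \<or> H = converse_mg G"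

definition switching_equivalent :: "mgraph \<Rightarrow> mgraph \<Rightarrow> bool" where
  "switching_equivalent G H \<longleftrightarrow> switch_step\<^sup>*\<^sup>* G H"

end

theory Submission
  imports Defs "Jordan_Normal_Form.DL_Rank_Submatrix" "Jordan_Normal_Form.Schur_Decomposition"
begin



lemma omega_cnj_mult[simp]: "cnj omega * omega = 1" unfolding omega_def by (simp add: complex_eq_iff power2_eq_square)
lemma omega_mult_cnj[simp]: "omega * cnj omega = 1" using omega_cnj_mult by (simp add: mult.commute)
lemma omega_sq: "omega * omega = omega - 1" unfolding omega_def by (simp add: complex_eq_iff field_simps)
lemma cnj_omega_eq: "cnj omega = 1 - omega" unfolding omega_def by (simp add: complex_eq_iff field_simps)
lemma omega_ne0[simp]: "omega \<noteq> 0" using omega_cnj_mult by force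
lemma omega_ne1[simp]: "omega \<noteq> 1" unfolding omega_def by (simp add: complex_eq_iff)
lemma omega_ne_cnj[simp]: "omega \<noteq> cnj omega" unfolding omega_def by (simp add: complex_eq_iff)
lemma cnj_omega_ne1[simp]: "cnj omega \<noteq> 1" unfolding omega_def by (simp add: complex_eq_iff)
lemma Re_omega: "Re omega = 1/2" unfolding omega_def by simp
lemma Im_omega: "Im omega = sqrt 3 / 2" unfolding omega_def by simp

definition E3 :: "complex set" where "E3 = {1, omega, cnj omega}"

lemma E3_cnj: "z \<in> E3 \<Longrightarrow> cnj z \<in> E3" unfolding E3_def by auto
lemma E3_unit: "z \<in> E3 \<Longrightarrow> cnj z * z = 1" unfolding E3_def by auto
lemma E3_T6: "z \<in> E3 \<Longrightarrow> z \<in> T6" unfolding E3_def T6_def by auto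
lemma omega_sq': "omega * omega = - cnj omega" using omega_sq cnj_omega_eq by simp
lemma cnj_omega_sq: "cnj omega * cnj omega = - omega"
proof -
  have "cnj (omega * omega) = - omega" by (simp add: omega_sq')
  thus ?thesis by simp
qed
lemma T6_mult_E3: "z \<in> T6 \<Longrightarrow> w \<in> E3 \<Longrightarrow> z * w \<in> T6"
  unfolding E3_def T6_def
  by (auto simp: omega_sq' cnj_omega_sq)
lemma E3_mult_T6: "z \<in> E3 \<Longrightarrow> w \<in> E3 \<Longrightarrow> z * w \<in> T6"
  using T6_mult_E3 E3_T6 by blast
lemma T6_cnj: "z \<in> T6 \<Longrightarrow> cnj z \<in> T6" unfolding T6_def by auto
lemma T6_unit: "z \<in> T6 \<Longrightarrow> cnj z * z = 1" unfolding T6_def by auto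
lemma T6_re: "z \<in> T6 \<Longrightarrow> z + cnj z \<noteq> 0"
  unfolding T6_def omega_def by (auto simp: complex_eq_iff)
lemma triangle_re: "a \<in> E3 \<Longrightarrow> b \<in> E3 \<Longrightarrow> c \<in> E3 \<Longrightarrow> a*b*c + cnj (a*b*c) \<noteq> 0"
  using T6_re T6_mult_E3 E3_mult_T6 by blast


definition nm :: "mgraph \<Rightarrow> nat \<Rightarrow> nat \<Rightarrow> complex" where
  "nm G u v = (if (u,v) \<in> arc G then omega
     else if (v,u) \<in> arc G then cnj omega
     else if (u,v) \<in> und G then 1 else 0)"

lemma Nmat_carrier: "Nmat G \<in> carrier_mat (nv G) (nv G)" unfolding Nmat_def by auto
lemma Nmat_nm: "x < nv G \<Longrightarrow> y < nv G \<Longrightarrow> Nmat G $$ (x,y) = nm G x y"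
  unfolding Nmat_def nm_def by auto

context fixes G assumes mg: "mixed_graph G"
begin
lemma mg_und: "(x,y) \<in> und G \<Longrightarrow> (y,x) \<in> und G \<and> x \<noteq> y \<and> x < nv G \<and> y < nv G"
  using mg unfolding mixed_graph_def by blast
lemma mg_arc: "(x,y) \<in> arc G \<Longrightarrow> x \<noteq> y \<and> (y,x) \<notin> arc G \<and> (x,y) \<notin> und G \<and> x < nv G \<and> y < nv G"
  using mg unfolding mixed_graph_def by blast
lemma nm_diag[simp]: "nm G x x = 0"
  unfolding nm_def using mg_und mg_arc by auto
lemma nm_sym: "nm G y x = cnj (nm G x y)"
  unfolding nm_def using mg_und mg_arc by auto
lemma nm_adj: "nm G x y \<noteq> 0 \<longleftrightarrow> underlying_adj G x y"
proof -
  have "nm G x y \<noteq> 0 \<longleftrightarrow> (x,y) \<in> arc G \<or> (y,x) \<in> arc G \<or> (x,y) \<in> und G"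
    unfolding nm_def by simp
  thus ?thesis unfolding underlying_adj_def by blast
qed
lemma nm_E3: "nm G x y \<noteq> 0 \<Longrightarrow> nm G x y \<in> E3"
  unfolding nm_def E3_def by (auto split: if_split_asm)
lemma adj_range: "underlying_adj G x y \<Longrightarrow> x < nv G \<and> y < nv G"
  unfolding underlying_adj_def using mg_und mg_arc by blast
lemma adj_sym: "underlying_adj G x y \<Longrightarrow> underlying_adj G y x"
  unfolding underlying_adj_def using mg_und by blast
lemma nm_unit: "nm G x y \<noteq> 0 \<Longrightarrow> cnj (nm G x y) * nm G x y = 1"
  using nm_E3 E3_unit by blast
end


definition D3 :: "(nat \<Rightarrow> nat \<Rightarrow> complex) \<Rightarrow> nat \<Rightarrow> nat \<Rightarrow> nat \<Rightarrow> nat \<Rightarrow> nat \<Rightarrow> nat \<Rightarrow> complex" where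
  "D3 A i j k l m q = A i l * A j m * A k q - A i l * A j q * A k m - A i m * A j l * A k q
     + A i m * A j q * A k l + A i q * A j l * A k m - A i q * A j m * A k l"

definition minors_zero :: "mgraph \<Rightarrow> bool" where
  "minors_zero G \<longleftrightarrow> (\<forall>i j k l m q. i < nv G \<longrightarrow> j < nv G \<longrightarrow> k < nv G \<longrightarrow> l < nv G
      \<longrightarrow> m < nv G \<longrightarrow> q < nv G \<longrightarrow> D3 (nm G) i j k l m q = 0)"

context fixes G assumes mg: "mixed_graph G" and mz: "minors_zero G"
begin

lemma no_triangle:
  assumes "underlying_adj G x y" "underlying_adj G y z" "underlying_adj G x z"
  shows False
proof -
  have r: "x < nv G" "y < nv G" "z < nv G" using assms adj_range[OF mg] by auto
  have "D3 (nm G) x y z x y z = nm G x y * nm G y z * nm G z x + cnj (nm G x y * nm G y z * nm G z x)"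
    unfolding D3_def using nm_sym[OF mg, of x y] nm_sym[OF mg, of y z] nm_sym[OF mg, of z x]
    by (simp add: nm_diag[OF mg] algebra_simps)
  moreover have "D3 (nm G) x y z x y z = 0" using mz r unfolding minors_zero_def by blast
  moreover have "nm G x y \<in> E3" "nm G y z \<in> E3" "nm G z x \<in> E3"
    using assms nm_adj[OF mg] nm_E3[OF mg] adj_sym[OF mg] by blast+
  ultimately show False using triangle_re by metis
qed

lemma no_P4:
  assumes "underlying_adj G a b" "underlying_adj G b c" "underlying_adj G c d"
    "\<not> underlying_adj G a c" "\<not> underlying_adj G b d" "\<not> underlying_adj G a d"
  shows False
proof -
  have r: "a < nv G" "b < nv G" "c < nv G" "d < nv G" using assms adj_range[OF mg] by auto
  have z: "nm G a c = 0" "nm G b d = 0" "nm G a d = 0" using assms nm_adj[OF mg] by auto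
  have "D3 (nm G) a b c b c d = nm G a b * nm G b c * nm G c d"
    unfolding D3_def using z by (simp add: nm_diag[OF mg])
  moreover have "D3 (nm G) a b c b c d = 0" using mz r unfolding minors_zero_def by blast
  moreover have "nm G a b \<noteq> 0" "nm G b c \<noteq> 0" "nm G c d \<noteq> 0"
    using assms nm_adj[OF mg] by blast+
  ultimately show False by simp
qed

lemma quad_rel:
  assumes "x < nv G" "x' < nv G" "y < nv G" "y' < nv G"
    "\<not> underlying_adj G x x'" "\<not> underlying_adj G y y'" "underlying_adj G y x"
  shows "nm G x y * nm G x' y' = nm G x y' * nm G x' y"
proof -
  have z: "nm G x' x = 0" "nm G y y' = 0" using assms nm_adj[OF mg] adj_sym[OF mg] by blast+
  have "D3 (nm G) x x' y y y' x = nm G y x * (nm G x y * nm G x' y' - nm G x y' * nm G x' y)"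
    unfolding D3_def using z by (simp add: nm_diag[OF mg] algebra_simps)
  moreover have "D3 (nm G) x x' y y y' x = 0" using mz assms unfolding minors_zero_def by blast
  moreover have "nm G y x \<noteq> 0" using assms nm_adj[OF mg] by blast
  ultimately show ?thesis by simp
qed


lemma bip_structure:
  assumes conn: "connected_mg G" and n2: "2 \<le> nv G"
  shows "\<exists>(\<sigma>::nat\<Rightarrow>bool) p. (\<forall>x<nv G. p x \<in> T6) \<and>
     (\<forall>x<nv G. \<forall>y<nv G. nm G x y = (if \<sigma> x = \<sigma> y then 0 else p x * cnj (p y)))"
proof -
  let ?adj = "underlying_adj G"
  define r where "r = (0::nat)"
  have r: "r < nv G" using n2 unfolding r_def by auto
  have "?adj\<^sup>*\<^sup>* r 1" using conn n2 r unfolding connected_mg_def by auto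
  then obtain t where t: "?adj r t"
    by (cases rule: converse_rtranclpE) (auto simp: r_def)
  have J: "?adj r w \<or> (\<forall>y. ?adj r y \<longrightarrow> ?adj w y)" if "?adj\<^sup>*\<^sup>* r w" for w
    using that
  proof (induction rule: rtranclp_induct)
    case base then show ?case by auto
  next
    case (step z w)
    show ?case
    proof (cases "?adj r w")
      case True then show ?thesis by auto
    next
      case nw: False
      show ?thesis
      proof (cases "?adj r z")
        case True
        have "?adj w y" if ry: "?adj r y" for y
        proof (rule ccontr)
          assume nwy: "\<not> ?adj w y"
          have "\<not> ?adj z y" using no_triangle True ry by blast
          moreover have "\<not> ?adj w r" using nw adj_sym[OF mg] by blast
          ultimately show False
            using no_P4[of w z r y] step(2) True ry nwy adj_sym[OF mg] by blast
        qed
        then show ?thesis by blast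
      next
        case False
        with step(3) have zt: "?adj z t" using t by blast
        have "\<not> ?adj w t"
          using no_triangle[of w z t] step(2) zt adj_sym[OF mg] by blast
        moreover have "\<not> ?adj w r" using nw adj_sym[OF mg] by blast
        ultimately have False
          using no_P4[of w z t r] step(2) zt t False adj_sym[OF mg] by blast
        then show ?thesis ..
      qed
    qed
  qed
  define \<sigma> where "\<sigma> x = ?adj r x" for x
  have side: "?adj x y \<longleftrightarrow> \<sigma> x \<noteq> \<sigma> y" if xy: "x < nv G" "y < nv G" for x y
  proof -
    have Jx: "?adj r x \<or> (\<forall>y. ?adj r y \<longrightarrow> ?adj x y)" using J conn r xy unfolding connected_mg_def by blast
    have Jy: "?adj r y \<or> (\<forall>x. ?adj r x \<longrightarrow> ?adj y x)" using J conn r xy unfolding connected_mg_def by blast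
    show ?thesis
    proof (cases "\<sigma> x"; cases "\<sigma> y")
      assume a: "\<sigma> x" "\<sigma> y"
      then show ?thesis using no_triangle[of r x y] unfolding \<sigma>_def by blast
    next
      assume a: "\<sigma> x" "\<not> \<sigma> y"
      then show ?thesis using Jy adj_sym[OF mg] unfolding \<sigma>_def by blast
    next
      assume a: "\<not> \<sigma> x" "\<sigma> y"
      then show ?thesis using Jx unfolding \<sigma>_def by blast
    next
      assume a: "\<not> \<sigma> x" "\<not> \<sigma> y"
      have "\<not> ?adj x y"
      proof
        assume "?adj x y"
        moreover have "?adj x t" "?adj y t" using Jx Jy a t unfolding \<sigma>_def by blast+
        ultimately show False using no_triangle[of x y t] adj_sym[OF mg] by blast
      qed
      then show ?thesis using a by simp
    qed
  qed
  have trange: "t < nv G" using t adj_range[OF mg] by blast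
  have "\<not> ?adj r r" using nm_adj[OF mg, of r r] nm_diag[OF mg] by simp
  then have st: "\<sigma> t" "\<not> \<sigma> r" using t unfolding \<sigma>_def by auto
  define p where "p x = (if \<sigma> x then cnj (nm G r x) * nm G r t else nm G x t)" for x
  have pT6: "p x \<in> T6" if "x < nv G" for x
  proof (cases "\<sigma> x")
    case True
    have "?adj r x" using True unfolding \<sigma>_def .
    then have "nm G r x \<in> E3" "nm G r t \<in> E3" using t nm_adj[OF mg] nm_E3[OF mg] by metis+
    then have "cnj (nm G r x) * nm G r t \<in> T6" using E3_mult_T6 E3_cnj by blast
    then show ?thesis using True unfolding p_def by simp
  next
    case False
    have "?adj x t" using side[OF that trange] st False by simp
    then have "nm G x t \<in> T6" using nm_adj[OF mg] nm_E3[OF mg] E3_T6 by metis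
    then show ?thesis using False unfolding p_def by simp
  qed
  have AB: "nm G x y = p x * cnj (p y)" if xy: "x < nv G" "y < nv G" "\<not> \<sigma> x" "\<sigma> y" for x y
  proof -
    have q: "nm G x y * nm G r t = nm G x t * nm G r y"
      apply (rule quad_rel[OF xy(1) r xy(2) trange])
      using side[OF xy(1) r] side[OF xy(2) trange] side[OF xy(2) xy(1)] xy st by simp_all
    have u: "cnj (nm G r t) * nm G r t = 1" using nm_unit[OF mg] t nm_adj[OF mg] by metis
    have u': "nm G r t * cnj (nm G r t) = 1" using u by (simp only: mult.commute)
    have "nm G x y = nm G x y * (nm G r t * cnj (nm G r t))" by (simp only: u' mult_1_right)
    also have "\<dots> = (nm G x y * nm G r t) * cnj (nm G r t)" by (simp only: mult.assoc)
    also have "\<dots> = nm G x t * nm G r y * cnj (nm G r t)" by (simp only: q)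
    also have "\<dots> = p x * cnj (p y)" unfolding p_def using xy(3,4) by simp
    finally show ?thesis .
  qed
  have "nm G x y = (if \<sigma> x = \<sigma> y then 0 else p x * cnj (p y))" if xy: "x < nv G" "y < nv G" for x y
  proof (cases "\<sigma> x = \<sigma> y")
    case True
    then have "nm G x y = 0" using side[OF xy] nm_adj[OF mg, of x y] by simp
    then show ?thesis using True by simp
  next
    case False
    show ?thesis
    proof (cases "\<sigma> x")
      case True
      have "nm G x y = cnj (nm G y x)" by (rule nm_sym[OF mg])
      also have "\<dots> = cnj (p y * cnj (p x))" using AB[of y x] xy True False by simp
      also have "\<dots> = p x * cnj (p y)" by (simp only: complex_cnj_mult complex_cnj_cnj mult.commute)
      finally show ?thesis using False by simp
    next
      case f: False
      then have "\<sigma> y" using False by simp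
      then show ?thesis using AB[OF xy f] False by simp
    qed
  qed
  note nmform = this
  have A1: "\<forall>x<nv G. p x \<in> T6" using pT6 by blast
  have A2: "\<forall>x<nv G. \<forall>y<nv G. nm G x y = (if \<sigma> x = \<sigma> y then 0 else p x * cnj (p y))"
    by (intro allI impI nmform)
  show ?thesis by (rule exI[where x=\<sigma>], rule exI[where x=p], rule conjI[OF A1 A2])
qed

end




lemma det3: assumes M: "(M :: complex mat) \<in> carrier_mat 3 3"
  shows "det M = D3 (\<lambda>a b. M $$ (a,b)) 0 1 2 0 1 2"
proof -
  have e: "{..<3::nat} = {0,1,2}" "{..<2::nat} = {0,1}" by auto
  have d2: "det A = A $$ (0,0) * A $$ (1,1) - A $$ (0,1) * A $$ (1,0)" if A: "(A :: complex mat) \<in> carrier_mat 2 2" for A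
  proof -
    have "det A = (\<Sum>j<2. A $$ (0,j) * cofactor A 0 j)" by (rule laplace_expansion_row[OF A], simp)
    also have "\<dots> = A $$ (0,0) * A $$ (1,1) - A $$ (0,1) * A $$ (1,0)"
      unfolding e cofactor_def using A
      by (simp add: det_single mat_delete_def)
    finally show ?thesis .
  qed
  have "det M = (\<Sum>j<3. M $$ (0,j) * cofactor M 0 j)" by (rule laplace_expansion_row[OF M], simp)
  also have "\<dots> = D3 (\<lambda>a b. M $$ (a,b)) 0 1 2 0 1 2"
    unfolding e cofactor_def using M
    by (simp add: d2 mat_delete_def D3_def algebra_simps numeral_2_eq_2)
  finally show ?thesis .
qed


lemma D3_r12: "D3 f j i k l m q = - D3 f i j k l m q" unfolding D3_def by (simp add: algebra_simps)
lemma D3_r23: "D3 f i k j l m q = - D3 f i j k l m q" unfolding D3_def by (simp add: algebra_simps)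
lemma D3_r13: "D3 f k j i l m q = - D3 f i j k l m q" unfolding D3_def by (simp add: algebra_simps)
lemma D3_c12: "D3 f i j k m l q = - D3 f i j k l m q" unfolding D3_def by (simp add: algebra_simps)
lemma D3_c23: "D3 f i j k l q m = - D3 f i j k l m q" unfolding D3_def by (simp add: algebra_simps)
lemma D3_c13: "D3 f i j k q m l = - D3 f i j k l m q" unfolding D3_def by (simp add: algebra_simps)
lemma D3_req: "i = j \<or> j = k \<or> i = k \<Longrightarrow> D3 f i j k l m q = 0" unfolding D3_def by (auto simp: algebra_simps)
lemma D3_ceq: "l = m \<or> m = q \<or> l = q \<Longrightarrow> D3 f i j k l m q = 0" unfolding D3_def by (auto simp: algebra_simps)

lemma D3_rows_sort:
  assumes "\<And>i j k. i < j \<Longrightarrow> j < k \<Longrightarrow> k < n \<Longrightarrow> D3 f i j k l m q = 0"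
    and "i < n" "j < n" "k < n"
  shows "D3 f i j k l m q = 0"
proof -
  have "i = j \<or> j = k \<or> i = k \<or> (i<j \<and> j<k) \<or> (i<k \<and> k<j) \<or> (j<i \<and> i<k) \<or> (j<k \<and> k<i) \<or> (k<i \<and> i<j) \<or> (k<j \<and> j<i)" by arith
  then show ?thesis
  proof (elim disjE)
    assume "i<k \<and> k<j" then show ?thesis using assms(1)[of i k j] D3_r23[of f i j k] assms by auto
  next
    assume "j<i \<and> i<k" then show ?thesis using assms(1)[of j i k] D3_r12[of f i j k] assms by auto
  next
    assume "j<k \<and> k<i" then show ?thesis using assms(1)[of j k i] D3_r12[of f i j k] D3_r23[of f j i k] assms by auto
  next
    assume "k<i \<and> i<j" then show ?thesis using assms(1)[of k i j] D3_r13[of f i j k] D3_r23[of f k i j] assms by auto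
  next
    assume "k<j \<and> j<i" then show ?thesis using assms(1)[of k j i] D3_r13[of f i j k] assms by auto
  qed (use assms D3_req in auto)
qed

lemma D3_cols_sort:
  assumes "\<And>l m q. l < m \<Longrightarrow> m < q \<Longrightarrow> q < n \<Longrightarrow> D3 f i j k l m q = 0"
    and "l < n" "m < n" "q < n"
  shows "D3 f i j k l m q = 0"
proof -
  have "l = m \<or> m = q \<or> l = q \<or> (l<m \<and> m<q) \<or> (l<q \<and> q<m) \<or> (m<l \<and> l<q) \<or> (m<q \<and> q<l) \<or> (q<l \<and> l<m) \<or> (q<m \<and> m<l)" by arith
  then show ?thesis
  proof (elim disjE)
    assume "l<q \<and> q<m" then show ?thesis using assms(1)[of l q m] D3_c23[of f i j k l m q] assms by auto
  next
    assume "m<l \<and> l<q" then show ?thesis using assms(1)[of m l q] D3_c12[of f i j k l m q] assms by auto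
  next
    assume "m<q \<and> q<l" then show ?thesis using assms(1)[of m q l] D3_c12[of f i j k l m q] D3_c23[of f i j k m l q] assms by auto
  next
    assume "q<l \<and> l<m" then show ?thesis using assms(1)[of q l m] D3_c13[of f i j k l m q] D3_c23[of f i j k q l m] assms by auto
  next
    assume "q<m \<and> m<l" then show ?thesis using assms(1)[of q m l] D3_c13[of f i j k l m q] assms by auto
  qed (use assms D3_ceq in auto)
qed

lemma pick3: assumes "i < j" "j < k"
  shows "pick {i,j,k} 0 = i" "pick {i,j,k} 1 = j" "pick {i,j,k} 2 = k"
proof -
  show p0: "pick {i,j,k} 0 = i" using assms by (simp, intro Least_equality) auto
  show p1: "pick {i,j,k} 1 = j" using assms p0 by (simp add: One_nat_def, intro Least_equality) auto
  show "pick {i,j,k} 2 = k" using assms p1 by (simp add: numeral_2_eq_2, intro Least_equality) auto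
qed

lemma minor_sorted:
  assumes A: "(A :: complex mat) \<in> carrier_mat n n"
    and "i < j" "j < k" "k < n" "l < m" "m < q" "q < n"
  shows "det (submatrix A {i,j,k} {l,m,q}) = D3 (\<lambda>a b. A $$ (a,b)) i j k l m q"
    "card {a. a < n \<and> a \<in> {l,m,q}} = 3"
proof -
  have c1: "{a. a < n \<and> a \<in> {i,j,k}} = {i,j,k}" "{a. a < n \<and> a \<in> {l,m,q}} = {l,m,q}" using assms by auto
  have c2: "card {a. a < n \<and> a \<in> {i,j,k}} = 3" "card {a. a < n \<and> a \<in> {l,m,q}} = 3"
    unfolding c1 using assms by auto
  then show "card {a. a < n \<and> a \<in> {l,m,q}} = 3" by simp
  have S: "submatrix A {i,j,k} {l,m,q} \<in> carrier_mat 3 3" using c2 A unfolding carrier_mat_def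
    by (simp add: dim_submatrix)
  have idx: "submatrix A {i,j,k} {l,m,q} $$ (a,b) = A $$ (pick {i,j,k} a, pick {l,m,q} b)" if "a < 3" "b < 3" for a b
    by (rule submatrix_index) (use that c2 A in auto)
  show "det (submatrix A {i,j,k} {l,m,q}) = D3 (\<lambda>a b. A $$ (a,b)) i j k l m q"
    unfolding det3[OF S] D3_def using idx pick3[of i j k] pick3[of l m q] assms by simp
qed


lemma rank2_minors:
  assumes "rank_N G = 2"
  shows "minors_zero G"
proof -
  let ?n = "nv G"
  have sorted: "D3 (nm G) i j k l m q = 0" if "i < j" "j < k" "k < ?n" "l < m" "m < q" "q < ?n" for i j k l m q
  proof (rule ccontr)
    assume ne: "D3 (nm G) i j k l m q \<noteq> 0"
    have "D3 (\<lambda>a b. Nmat G $$ (a,b)) i j k l m q = D3 (nm G) i j k l m q"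
      unfolding D3_def using that Nmat_nm[of _ G] by simp
    then have "det (submatrix (Nmat G) {i,j,k} {l,m,q}) \<noteq> 0"
      using minor_sorted(1)[OF Nmat_carrier that] ne by simp
    from vec_space.rank_gt_minor[OF Nmat_carrier this]
    have "3 \<le> vec_space.rank ?n (Nmat G)" using minor_sorted(2)[OF Nmat_carrier that] by simp
    then show False using assms unfolding rank_N_def by simp
  qed
  show ?thesis unfolding minors_zero_def
  proof (intro allI impI)
    fix i j k l m q assume r: "i < ?n" "j < ?n" "k < ?n" "l < ?n" "m < ?n" "q < ?n"
    have "D3 (nm G) i j k l m q = 0" if "i < j" "j < k" "k < ?n" for i j k
      by (rule D3_cols_sort[where n = ?n]) (use sorted that r in auto)
    then show "D3 (nm G) i j k l m q = 0"
      by (rule D3_rows_sort[where n = ?n]) (use r in auto)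
  qed
qed




definition mytrace :: "complex mat \<Rightarrow> complex" where
  "mytrace A = (\<Sum>i<dim_row A. A $$ (i,i))"

lemma mult_entry: "A \<in> carrier_mat n m \<Longrightarrow> B \<in> carrier_mat m p \<Longrightarrow> i < n \<Longrightarrow> j < p \<Longrightarrow>
  (A * B) $$ (i,j) = (\<Sum>k<m. A $$ (i,k) * B $$ (k,j))"
  by (auto simp: scalar_prod_def row_def col_def atLeast0LessThan)

lemma trace_comm: assumes A: "A \<in> carrier_mat n m" and B: "B \<in> carrier_mat m n"
  shows "mytrace (A * B) = mytrace (B * A)"
proof -
  have "mytrace (A * B) = (\<Sum>i<n. \<Sum>k<m. A $$ (i,k) * B $$ (k,i))"
    unfolding mytrace_def using A B by (simp add: scalar_prod_def row_def col_def atLeast0LessThan)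
  also have "\<dots> = (\<Sum>k<m. \<Sum>i<n. B $$ (k,i) * A $$ (i,k))"
    by (subst sum.swap) (simp add: mult.commute)
  also have "\<dots> = mytrace (B * A)"
    unfolding mytrace_def using A B by (simp add: scalar_prod_def row_def col_def atLeast0LessThan)
  finally show ?thesis .
qed

lemma trace_sq_ut: assumes B: "B \<in> carrier_mat n n" and ut: "upper_triangular B"
  shows "mytrace (B * B) = (\<Sum>i<n. B $$ (i,i) ^ 2)"
proof -
  have "(B * B) $$ (i,i) = B $$ (i,i) ^ 2" if i: "i < n" for i
  proof -
    have "(B * B) $$ (i,i) = (\<Sum>k<n. B $$ (i,k) * B $$ (k,i))" by (rule mult_entry[OF B B i i])
    also have "\<dots> = (\<Sum>k\<in>{i}. B $$ (i,k) * B $$ (k,i))"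
    proof (rule sum.mono_neutral_right)
      show "\<forall>k\<in>{..<n} - {i}. B $$ (i,k) * B $$ (k,i) = 0"
      proof
        fix k assume k: "k \<in> {..<n} - {i}"
        show "B $$ (i,k) * B $$ (k,i) = 0"
        proof (cases "k < i")
          case True then show ?thesis using ut B i unfolding upper_triangular_def by auto
        next
          case False then have "i < k" using k by auto
          then show ?thesis using ut B k unfolding upper_triangular_def by auto
        qed
      qed
    qed (use i in auto)
    finally show ?thesis by (simp add: power2_eq_square)
  qed
  then show ?thesis unfolding mytrace_def using B by simp
qed

lemma trace_sq_es: assumes A: "(A :: complex mat) \<in> carrier_mat n n"
  and c: "char_poly A = (\<Prod>e\<leftarrow>es. [:- e, 1:])"
  shows "mytrace (A * A) = (\<Sum>e\<leftarrow>es. e ^ 2)"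
proof -
  obtain B P Q where s: "schur_decomposition A es = (B,P,Q)" by (cases "schur_decomposition A es") auto
  from schur_decomposition[OF A c s] have sim: "similar_mat_wit A B P Q" and ut: "upper_triangular B"
    and d: "diag_mat B = es" by auto
  from similar_mat_witD2[OF A sim] have PQ: "Q * P = 1\<^sub>m n" and AP: "A = P * B * Q"
    and Bc: "B \<in> carrier_mat n n" and Pc: "P \<in> carrier_mat n n" and Qc: "Q \<in> carrier_mat n n" by auto
  have QPX: "Q * (P * X) = X" if X: "X \<in> carrier_mat n n" for X
  proof -
    have "Q * (P * X) = (Q * P) * X" by (rule assoc_mult_mat[symmetric, OF Qc Pc X])
    then show ?thesis using PQ X by simp
  qed
  have BQ: "B * Q \<in> carrier_mat n n" "P * (B * Q) \<in> carrier_mat n n" "B * B \<in> carrier_mat n n"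
    using Bc Pc Qc by auto
  have "A * A = (P * (B * Q)) * (P * (B * Q))" unfolding AP using assoc_mult_mat[OF Pc Bc Qc] by simp
  also have "\<dots> = P * ((B * Q) * (P * (B * Q)))" by (rule assoc_mult_mat[OF Pc BQ(1) BQ(2)])
  also have "\<dots> = P * (B * (Q * (P * (B * Q))))" using assoc_mult_mat[OF Bc Qc BQ(2)] by simp
  also have "\<dots> = P * (B * (B * Q))" using QPX[OF BQ(1)] by simp
  also have "\<dots> = P * (B * B) * Q" using assoc_mult_mat[OF Bc Bc Qc] assoc_mult_mat[OF Pc BQ(3) Qc] by simp
  finally have "A * A = P * (B * B) * Q" .
  then have "mytrace (A * A) = mytrace (Q * (P * (B * B)))"
    using trace_comm[of "P * (B * B)" n n Q] Bc Pc Qc by simp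
  also have "\<dots> = mytrace (B * B)" using Bc QPX by simp
  also have "\<dots> = (\<Sum>i<n. B $$ (i,i) ^ 2)" by (rule trace_sq_ut[OF Bc ut])
  also have "\<dots> = (\<Sum>e\<leftarrow>es. e ^ 2)"
    unfolding d[symmetric] diag_mat_def using Bc
    by (simp add: sum_set_upt_conv_sum_list_nat[symmetric] atLeast0LessThan o_def)
  finally show ?thesis .
qed

lemma trace_sq_charpoly: assumes A: "(A :: complex mat) \<in> carrier_mat n n" and B: "B \<in> carrier_mat n n"
  and c: "char_poly A = char_poly B"
  shows "mytrace (A * A) = mytrace (B * B)"
proof -
  obtain es where es: "char_poly A = (\<Prod>e\<leftarrow>es. [:- e, 1:])" using char_poly_factorized[OF A] by blast
  show ?thesis using trace_sq_es[OF A es] trace_sq_es[OF B es[unfolded c]] by simp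
qed


lemma proots_lin_prod: "proots (\<Prod>a\<leftarrow>as. [:- a, 1:]) = mset (as :: complex list)"
proof (induction as)
  case Nil then show ?case by simp
next
  case (Cons a as)
  have lz: "[:- b, 1:] \<noteq> (0 :: complex poly)" for b by simp
  have nz: "(\<Prod>a\<leftarrow>as. [:- a, 1:]) \<noteq> (0 :: complex poly)"
    unfolding prod_list_zero_iff using lz by auto
  have "proots (\<Prod>a\<leftarrow>a#as. [:- a, 1:]) = proots ([:- a, 1:] * (\<Prod>a\<leftarrow>as. [:- a, 1:]))"
    by (simp only: list.map prod_list.Cons)
  also have "\<dots> = proots [:- a, 1:] + proots (\<Prod>a\<leftarrow>as. [:- a, 1:])"
    by (rule proots_mult[OF lz nz])
  finally show ?case using Cons by simp
qed

lemma lin_prod_mset: "(\<Prod>a\<leftarrow>as. [:- a, 1:]) = (\<Prod>a\<in>#mset as. [:- a, 1:] :: complex poly)"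
  by (simp add: prod_mset_prod_list[symmetric])

lemma cospectral_charpoly:
  assumes "cospectral G H"
  shows "nv G = nv H" "char_poly (Nmat G) = char_poly (Nmat H)"
proof -
  obtain as where as: "char_poly (Nmat G) = (\<Prod>a\<leftarrow>as. [:- a, 1:])" "length as = nv G"
    using char_poly_factorized[OF Nmat_carrier] by blast
  obtain bs where bs: "char_poly (Nmat H) = (\<Prod>a\<leftarrow>bs. [:- a, 1:])" "length bs = nv H"
    using char_poly_factorized[OF Nmat_carrier] by blast
  have m: "mset as = mset bs" using assms as(1) bs(1) proots_lin_prod
    unfolding cospectral_def eigenvalue_mset_def by metis
  show "nv G = nv H" using as(2) bs(2) m by (metis size_mset)
  show "char_poly (Nmat G) = char_poly (Nmat H)" unfolding as(1) bs(1) lin_prod_mset m ..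
qed




definition bip :: "mgraph \<Rightarrow> (nat \<Rightarrow> bool) \<Rightarrow> (nat \<Rightarrow> complex) \<Rightarrow> bool" where
  "bip G \<sigma> p \<longleftrightarrow> (\<forall>x<nv G. p x \<in> T6) \<and>
     (\<forall>x<nv G. \<forall>y<nv G. nm G x y = (if \<sigma> x = \<sigma> y then 0 else p x * cnj (p y)))"

lemma mv_entry: assumes "x < nv G" "dim_vec w = nv G"
  shows "(Nmat G *\<^sub>v w) $ x = (\<Sum>y<nv G. nm G x y * w $ y)"
  using assms Nmat_carrier[of G] by (simp add: scalar_prod_def row_def atLeast0LessThan Nmat_nm)

lemma trace_nm: "mytrace (Nmat G * Nmat G) = (\<Sum>x<nv G. \<Sum>y<nv G. nm G x y * nm G y x)"
  unfolding mytrace_def using Nmat_carrier[of G]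
  by (simp add: scalar_prod_def row_def col_def atLeast0LessThan Nmat_nm)

lemma sum_side: "(\<Sum>y<(n::nat). if \<sigma> y = c then (k::complex) else 0) = k * of_nat (card {y. y < n \<and> \<sigma> y = c})"
proof -
  have "(\<Sum>y<n. if \<sigma> y = c then k else 0) = (\<Sum>y\<in>{y\<in>{..<n}. \<sigma> y = c}. k)"
    by (rule sum.inter_filter[symmetric]) simp
  also have "{y\<in>{..<n}. \<sigma> y = c} = {y. y < n \<and> \<sigma> y = c}" by auto
  finally show ?thesis by (simp add: mult.commute)
qed

context fixes G \<sigma> p assumes b: "bip G \<sigma> p"
begin

lemma bip_nm: "x < nv G \<Longrightarrow> y < nv G \<Longrightarrow> nm G x y = (if \<sigma> x = \<sigma> y then 0 else p x * cnj (p y))"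
  using b unfolding bip_def by blast
lemma bip_T6: "x < nv G \<Longrightarrow> p x \<in> T6" using b unfolding bip_def by blast

lemma bip_trace:
  "mytrace (Nmat G * Nmat G) = 2 * of_nat (card {y. y < nv G \<and> \<sigma> y}) * of_nat (card {y. y < nv G \<and> \<sigma> y = False})"
proof -
  let ?a = "card {y. y < nv G \<and> \<sigma> y = True}" and ?b = "card {y. y < nv G \<and> \<sigma> y = False}"
  have t: "nm G x y * nm G y x = (if \<sigma> y = (\<not> \<sigma> x) then 1 else 0)" if "x < nv G" "y < nv G" for x y
  proof -
    have "p x * cnj (p y) * (p y * cnj (p x)) = (cnj (p x) * p x) * (cnj (p y) * p y)" by (simp add: ac_simps)
    then show ?thesis using bip_nm[of x y] bip_nm[of y x] that T6_unit bip_T6 by auto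
  qed
  have "mytrace (Nmat G * Nmat G) = (\<Sum>x<nv G. \<Sum>y<nv G. if \<sigma> y = (\<not> \<sigma> x) then 1 else 0)"
    unfolding trace_nm using t by simp
  also have "\<dots> = (\<Sum>x<nv G. of_nat (card {y. y < nv G \<and> \<sigma> y = (\<not> \<sigma> x)}))"
    by (simp add: sum_side)
  also have "\<dots> = (\<Sum>x<nv G. if \<sigma> x = True then of_nat ?b else 0) + (\<Sum>x<nv G. if \<sigma> x = False then of_nat ?a else 0)"
    unfolding sum.distrib[symmetric] by (intro sum.cong refl) auto
  also have "\<dots> = 2 * of_nat ?a * of_nat ?b" unfolding sum_side by simp
  finally show ?thesis by simp
qed

lemma bip_mult: assumes x: "x < nv G"
  shows "(\<Sum>y<nv G. nm G x y * (f (\<sigma> y) * p y)) = p x * f (\<not> \<sigma> x) * of_nat (card {y. y < nv G \<and> \<sigma> y = (\<not> \<sigma> x)})"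
proof -
  have "nm G x y * (f (\<sigma> y) * p y) = (if \<sigma> y = (\<not> \<sigma> x) then p x * f (\<not> \<sigma> x) else 0)" if y: "y < nv G" for y
  proof -
    have "p x * cnj (p y) * (f (\<sigma> y) * p y) = p x * f (\<sigma> y) * (cnj (p y) * p y)" by (simp add: ac_simps)
    then show ?thesis using bip_nm[OF x y] T6_unit[OF bip_T6[OF y]] by auto
  qed
  then have "(\<Sum>y<nv G. nm G x y * (f (\<sigma> y) * p y)) = (\<Sum>y<nv G. if \<sigma> y = (\<not> \<sigma> x) then p x * f (\<not> \<sigma> x) else 0)"
    by simp
  also have "\<dots> = p x * f (\<not> \<sigma> x) * of_nat (card {y. y < nv G \<and> \<sigma> y = (\<not> \<sigma> x)})" by (rule sum_side)
  finally show ?thesis .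
qed

lemma bip_eigen:
  assumes a: "card {y. y < nv G \<and> \<sigma> y} > 0" and bb: "card {y. y < nv G \<and> \<sigma> y = False} > 0"
    and s: "s = 1 \<or> s = -1"
  shows "eigenvalue (Nmat G) (s * complex_of_real (sqrt (real (card {y. y < nv G \<and> \<sigma> y}) * real (card {y. y < nv G \<and> \<sigma> y = False}))))"
proof -
  let ?a = "card {y. y < nv G \<and> \<sigma> y}" and ?b = "card {y. y < nv G \<and> \<sigma> y = False}"
  define ra where "ra = complex_of_real (sqrt (real ?a))"
  define rb where "rb = complex_of_real (sqrt (real ?b))"
  have ra2: "ra * ra = of_nat ?a" unfolding ra_def by (simp flip: of_real_mult)
  have rb2: "rb * rb = of_nat ?b" unfolding rb_def by (simp flip: of_real_mult)
  have lam: "complex_of_real (sqrt (real ?a * real ?b)) = ra * rb" unfolding ra_def rb_def by (simp add: real_sqrt_mult)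
  define f where "f c = (if c then rb else s * ra)" for c
  define w where "w = vec (nv G) (\<lambda>y. f (\<sigma> y) * p y)"
  have s2: "s * s = 1" using s by auto
  have ev: "Nmat G *\<^sub>v w = (s * (ra * rb)) \<cdot>\<^sub>v w"
  proof (rule eq_vecI)
    show "dim_vec (Nmat G *\<^sub>v w) = dim_vec ((s * (ra * rb)) \<cdot>\<^sub>v w)" unfolding w_def using Nmat_carrier[of G] by simp
    fix x assume "x < dim_vec ((s * (ra * rb)) \<cdot>\<^sub>v w)"
    then have x: "x < nv G" unfolding w_def by simp
    have dw: "dim_vec w = nv G" unfolding w_def by simp
    have "(Nmat G *\<^sub>v w) $ x = (\<Sum>y<nv G. nm G x y * w $ y)" by (rule mv_entry[OF x dw])
    also have "\<dots> = (\<Sum>y<nv G. nm G x y * (f (\<sigma> y) * p y))" unfolding w_def by (intro sum.cong refl) simp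
    also have "\<dots> = p x * f (\<not> \<sigma> x) * of_nat (card {y. y < nv G \<and> \<sigma> y = (\<not> \<sigma> x)})"
      by (rule bip_mult[OF x])
    also have "\<dots> = (s * (ra * rb)) * w $ x"
    proof (cases "\<sigma> x")
      case True
      then have "p x * f (\<not> \<sigma> x) * of_nat (card {y. y < nv G \<and> \<sigma> y = (\<not> \<sigma> x)}) = p x * (s * ra) * (rb * rb)"
        unfolding f_def rb2 by simp
      then show ?thesis unfolding w_def f_def using x True by (simp add: ac_simps)
    next
      case False
      then have "p x * f (\<not> \<sigma> x) * of_nat (card {y. y < nv G \<and> \<sigma> y = (\<not> \<sigma> x)}) = p x * rb * (s * s) * (ra * ra)"
        unfolding f_def ra2 s2 by simp
      then show ?thesis unfolding w_def f_def using x False by (simp add: ac_simps)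
    qed
    also have "\<dots> = ((s * (ra * rb)) \<cdot>\<^sub>v w) $ x" unfolding w_def using x by simp
    finally show "(Nmat G *\<^sub>v w) $ x = ((s * (ra * rb)) \<cdot>\<^sub>v w) $ x" .
  qed
  have "w \<noteq> 0\<^sub>v (nv G)"
  proof
    assume w0: "w = 0\<^sub>v (nv G)"
    have "nv G > 0" using a by (metis (no_types, lifting) card.infinite gr_zeroI empty_Collect_eq less_zeroE card.empty)
    have e1: "\<exists>x<nv G. \<sigma> x" using a by (metis (mono_tags, lifting) card_gt_0_iff empty_Collect_eq)
    have e2: "\<exists>x<nv G. \<not> \<sigma> x" using bb by (metis (mono_tags, lifting) card_gt_0_iff empty_Collect_eq)
    have "w $ 0 = 0" using w0 \<open>nv G > 0\<close> by simp
    moreover have "f (\<sigma> 0) \<noteq> 0" using a bb s e1 e2 unfolding f_def ra_def rb_def by auto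
    moreover have "p 0 \<noteq> 0" using bip_T6[OF \<open>nv G > 0\<close>] T6_unit by force
    ultimately show False unfolding w_def using \<open>nv G > 0\<close> by simp
  qed
  then have "eigenvector (Nmat G) w (s * (ra * rb))"
    unfolding eigenvector_def using ev Nmat_carrier[of G] unfolding w_def by simp
  then show ?thesis unfolding eigenvalue_def lam by auto
qed

end




definition ipm :: "nat \<Rightarrow> (nat \<Rightarrow> nat \<Rightarrow> complex) \<Rightarrow> (nat \<Rightarrow> nat \<Rightarrow> complex) \<Rightarrow> complex" where
  "ipm n F G = (\<Sum>x<n. \<Sum>y<n. F x y * cnj (G x y))"

lemma ipm_lin_l: "ipm n (\<lambda>x y. F x y + c * G x y) H = ipm n F H + c * ipm n G H"
  unfolding ipm_def by (simp add: algebra_simps sum.distrib sum_distrib_left)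
lemma ipm_lin_r: "ipm n H (\<lambda>x y. F x y + c * G x y) = ipm n H F + cnj c * ipm n H G"
  unfolding ipm_def by (simp add: algebra_simps sum.distrib sum_distrib_left)
lemma ipm_swap: "ipm n G F = cnj (ipm n F G)"
  unfolding ipm_def by (simp add: mult.commute)

lemma ipm_self_zero: assumes "ipm n F F = 0" "x < n" "y < n" shows "F x y = 0"
proof -
  have "ipm n F F = complex_of_real (\<Sum>x<n. \<Sum>y<n. (norm (F x y))\<^sup>2)"
    unfolding ipm_def by (simp add: complex_norm_square[symmetric])
  then have "(\<Sum>x<n. \<Sum>y<n. (norm (F x y))\<^sup>2) = 0" using assms(1) by (metis of_real_eq_0_iff)
  then have "\<forall>x\<in>{..<n}. (\<Sum>y<n. (norm (F x y))\<^sup>2) = 0"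
    by (subst (asm) sum_nonneg_eq_0_iff) (auto intro: sum_nonneg)
  then have "(\<Sum>y<n. (norm (F x y))\<^sup>2) = 0" using assms by auto
  then have "\<forall>y\<in>{..<n}. (norm (F x y))\<^sup>2 = 0" by (subst (asm) sum_nonneg_eq_0_iff) auto
  then show ?thesis using assms by auto
qed

lemma sq_sum_real: "(\<Sum>x<n. u x * cnj (u x)) = complex_of_real (\<Sum>x<(n::nat). (norm (u x))\<^sup>2)"
  by (simp add: complex_norm_square[symmetric])

lemma sq_sum_nz: assumes "x < n" "u x \<noteq> 0" shows "(\<Sum>x<(n::nat). u x * cnj (u x)) \<noteq> 0"
proof -
  have "(\<Sum>x<n. (norm (u x))\<^sup>2) > 0"
    by (rule sum_pos2[of _ x]) (use assms in auto)
  then show ?thesis unfolding sq_sum_real of_real_eq_0_iff by simp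
qed

context
  fixes n :: nat and N :: "nat \<Rightarrow> nat \<Rightarrow> complex" and u v :: "nat \<Rightarrow> complex" and s :: complex
  assumes herm: "\<And>x y. x < n \<Longrightarrow> y < n \<Longrightarrow> N y x = cnj (N x y)"
    and sreal: "cnj s = s" and s0: "s \<noteq> 0"
    and eu: "\<And>x. x < n \<Longrightarrow> (\<Sum>y<n. N x y * u y) = s * u x"
    and ev: "\<And>x. x < n \<Longrightarrow> (\<Sum>y<n. N x y * v y) = - s * v x"
    and nu0: "(\<Sum>x<n. u x * cnj (u x)) \<noteq> 0"
    and nv0: "(\<Sum>x<n. v x * cnj (v x)) \<noteq> 0"
    and tr: "(\<Sum>x<n. \<Sum>y<n. N x y * N y x) = 2 * s * s"
begin

definition "nu = (\<Sum>x<n. u x * cnj (u x))"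
definition "nw = (\<Sum>x<n. v x * cnj (v x))"
definition "UU x y = u x * cnj (u y) / nu"
definition "VV x y = v x * cnj (v y) / nw"

lemma nu_real: "cnj nu = nu" unfolding nu_def by (simp add: mult.commute)
lemma nw_real: "cnj nw = nw" unfolding nw_def by (simp add: mult.commute)

lemma hc: "x < n \<Longrightarrow> y < n \<Longrightarrow> cnj (N y x) = N x y"
  using herm[of y x] by simp

lemma orth: "(\<Sum>x<n. cnj (u x) * v x) = 0"
proof -
  let ?ip = "\<Sum>x<n. cnj (u x) * v x"
  have "(\<Sum>x<n. cnj (u x) * (\<Sum>y<n. N x y * v y)) = - s * ?ip"
    using ev by (simp add: sum_distrib_left ac_simps)
  moreover have "(\<Sum>x<n. cnj (u x) * (\<Sum>y<n. N x y * v y)) = s * ?ip"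
  proof -
    have "(\<Sum>x<n. cnj (u x) * (\<Sum>y<n. N x y * v y)) = (\<Sum>x<n. \<Sum>y<n. cnj (u x) * N x y * v y)"
      by (simp add: sum_distrib_left ac_simps)
    also have "\<dots> = (\<Sum>y<n. \<Sum>x<n. cnj (u x) * N x y * v y)" by (rule sum.swap)
    also have "\<dots> = (\<Sum>y<n. v y * (\<Sum>x<n. cnj (N y x) * cnj (u x)))"
      by (intro sum.cong refl) (simp add: sum_distrib_left hc ac_simps)
    also have "\<dots> = (\<Sum>y<n. v y * cnj (\<Sum>x<n. N y x * u x))" by simp
    also have "\<dots> = (\<Sum>y<n. v y * cnj (s * u y))" using eu by simp
    also have "\<dots> = s * ?ip" using sreal by (simp add: sum_distrib_left ac_simps)
    finally show ?thesis .
  qed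
  ultimately have "2 * s * ?ip = 0" by (simp add: algebra_simps)
  then show ?thesis using s0 by simp
qed

lemma ip_NN: "ipm n N N = 2 * s * s"
  unfolding ipm_def using tr by (simp add: hc)


lemma ip_NU: "ipm n N UU = s"
proof -
  have "ipm n N UU = (\<Sum>x<n. cnj (u x) / nu * (\<Sum>y<n. N x y * u y))"
    unfolding ipm_def UU_def using nu_real
    by (simp add: sum_distrib_left ac_simps)
  also have "\<dots> = (\<Sum>x<n. s * (u x * cnj (u x)) / nu)" using eu by (simp add: ac_simps)
  also have "\<dots> = s * nu / nu" unfolding nu_def by (simp add: sum_divide_distrib sum_distrib_left)
  also have "\<dots> = s" using nu0 unfolding nu_def by simp
  finally show ?thesis .
qed

lemma ip_NV: "ipm n N VV = - s"
proof -
  have "ipm n N VV = (\<Sum>x<n. cnj (v x) / nw * (\<Sum>y<n. N x y * v y))"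
    unfolding ipm_def VV_def using nw_real
    by (simp add: sum_distrib_left ac_simps)
  also have "\<dots> = (\<Sum>x<n. - s * (v x * cnj (v x)) / nw)" using ev by (simp add: ac_simps)
  also have "\<dots> = - s * nw / nw" unfolding nw_def by (simp add: sum_divide_distrib sum_distrib_left)
  also have "\<dots> = - s" using nv0 unfolding nw_def by simp
  finally show ?thesis .
qed

lemma ip_UU: "ipm n UU UU = 1"
proof -
  have "ipm n UU UU = (\<Sum>x<n. u x * cnj (u x)) * (\<Sum>y<n. u y * cnj (u y)) / (nu * nu)"
    unfolding ipm_def UU_def using nu_real
    by (simp add: sum_distrib_left sum_distrib_right sum_divide_distrib ac_simps)
  then show ?thesis using nu0 unfolding nu_def by simp
qed

lemma ip_VV: "ipm n VV VV = 1"
proof -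
  have "ipm n VV VV = (\<Sum>x<n. v x * cnj (v x)) * (\<Sum>y<n. v y * cnj (v y)) / (nw * nw)"
    unfolding ipm_def VV_def using nw_real
    by (simp add: sum_distrib_left sum_distrib_right sum_divide_distrib ac_simps)
  then show ?thesis using nv0 unfolding nw_def by simp
qed

lemma ip_UV: "ipm n UU VV = 0"
proof -
  have "ipm n UU VV = cnj (\<Sum>x<n. cnj (u x) * v x) * (\<Sum>y<n. cnj (u y) * v y) / (nu * nw)"
    unfolding ipm_def UU_def VV_def using nw_real
    by (simp add: sum_distrib_left sum_distrib_right sum_divide_distrib ac_simps) (rule sum.swap)
  then show ?thesis using orth by simp
qed

lemma repr: assumes "x < n" "y < n"
  shows "N x y = s * UU x y + (- s) * VV x y"
proof -
  define M1 where "M1 x y = N x y + (- s) * UU x y" for x y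
  define M where "M x y = M1 x y + s * VV x y" for x y
  have M1e: "M1 = (\<lambda>x y. N x y + (- s) * UU x y)" unfolding M1_def by auto
  have Me: "M = (\<lambda>x y. M1 x y + s * VV x y)" unfolding M_def by auto
  have gen: "ipm n X M = ipm n X N - s * ipm n X UU + s * ipm n X VV" for X
    unfolding Me ipm_lin_r M1e using sreal by simp
  have l: "ipm n M M = ipm n N M - s * ipm n UU M + s * ipm n VV M"
    using ipm_lin_l[of n M1 s VV M, folded Me] ipm_lin_l[of n N "- s" UU M, folded M1e] by simp
  have e: "ipm n M M = (ipm n N N - s*ipm n N UU + s*ipm n N VV) - s*(ipm n UU N - s * ipm n UU UU + s*ipm n UU VV)
     + s*(ipm n VV N - s*ipm n VV UU + s* ipm n VV VV)" using l gen[of N] gen[of UU] gen[of VV] by simp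
  have "ipm n UU N = s" "ipm n VV N = - s" "ipm n VV UU = 0"
    using ipm_swap[of n UU N] ipm_swap[of n VV N] ipm_swap[of n VV UU] ip_NU ip_NV ip_UV sreal by simp_all
  then have "ipm n M M = 0"
    unfolding e ip_NN ip_NU ip_NV ip_UU ip_VV ip_UV by (simp add: algebra_simps)
  then have "M x y = 0" using ipm_self_zero assms by blast
  then show ?thesis unfolding M_def M1_def by (simp add: algebra_simps)
qed


lemma repr': assumes "x < n" "y < n"
  shows "N x y = (s * u x / (\<Sum>x<n. u x * cnj (u x))) * cnj (u y) + (- s * v x / (\<Sum>x<n. v x * cnj (v x))) * cnj (v y)"
  using repr[OF assms] unfolding UU_def VV_def nu_def nw_def by (simp add: algebra_simps)

end




lemma D3_r2: assumes f: "\<forall>x<n. \<forall>y<n. f x y = a x * b y + c x * d y"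
  and "i < n" "j < n" "k < n" "l < n" "m < n" "q < n"
  shows "D3 f i j k l m q = 0"
  unfolding D3_def using assms by (simp add: algebra_simps)

lemma eigvec_sums:
  assumes ev: "eigenvalue (Nmat H) lam"
  obtains u where "\<And>x. x < nv H \<Longrightarrow> (\<Sum>y<nv H. nm H x y * u y) = lam * u x"
    "(\<Sum>x<nv H. u x * cnj (u x)) \<noteq> 0"
proof -
  obtain w where w: "eigenvector (Nmat H) w lam" using ev unfolding eigenvalue_def by blast
  then have wc: "w \<in> carrier_vec (nv H)" and w0: "w \<noteq> 0\<^sub>v (nv H)" and we: "Nmat H *\<^sub>v w = lam \<cdot>\<^sub>v w"
    unfolding eigenvector_def using Nmat_carrier[of H] by auto
  have dw: "dim_vec w = nv H" using wc by auto
  have 1: "(\<Sum>y<nv H. nm H x y * w $ y) = lam * w $ x" if x: "x < nv H" for x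
    using mv_entry[OF x dw] arg_cong[OF we, of "\<lambda>v. v $ x"] x dw by simp
  obtain x where x: "x < nv H" "w $ x \<noteq> 0" using w0 dw by (metis eq_vecI index_zero_vec(1) index_zero_vec(2))
  have 2: "(\<Sum>x<nv H. w $ x * cnj (w $ x)) \<noteq> 0" by (rule sq_sum_nz[of x _ "\<lambda>x. w $ x", OF x])
  show ?thesis by (rule that[of "\<lambda>x. w $ x"]) (use 1 2 in auto)
qed

lemma H_minors:
  assumes mgH: "mixed_graph H" and nvs: "nv H = nv G"
    and cp: "char_poly (Nmat G) = char_poly (Nmat H)"
    and b: "bip G \<sigma> p"
    and a0: "card {y. y < nv G \<and> \<sigma> y} > 0" and b0: "card {y. y < nv G \<and> \<sigma> y = False} > 0"
  shows "minors_zero H"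
proof -
  let ?a = "card {y. y < nv G \<and> \<sigma> y}" and ?b = "card {y. y < nv G \<and> \<sigma> y = False}"
  define s where "s = complex_of_real (sqrt (real ?a * real ?b))"
  have evG: "eigenvalue (Nmat G) (1 * s)" "eigenvalue (Nmat G) (-1 * s)"
    using bip_eigen[OF b a0 b0, of 1] bip_eigen[OF b a0 b0, of "-1"] unfolding s_def by auto
  have evH: "eigenvalue (Nmat H) (1 * s)" "eigenvalue (Nmat H) (-1 * s)"
    using evG eigenvalue_root_char_poly[OF Nmat_carrier[of G]] eigenvalue_root_char_poly[OF Nmat_carrier[of H]] cp
    by auto
  obtain u where eu: "\<And>x. x < nv H \<Longrightarrow> (\<Sum>y<nv H. nm H x y * u y) = s * u x"
    and nu0: "(\<Sum>x<nv H. u x * cnj (u x)) \<noteq> 0"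
    using eigvec_sums[OF evH(1)] by auto
  obtain v where ev: "\<And>x. x < nv H \<Longrightarrow> (\<Sum>y<nv H. nm H x y * v y) = - s * v x"
    and nv0: "(\<Sum>x<nv H. v x * cnj (v x)) \<noteq> 0"
    using eigvec_sums[OF evH(2)] by auto
  have ss: "s * s = of_nat ?a * of_nat ?b" unfolding s_def by (simp flip: of_real_mult) (simp add: of_real_mult)
  have tr: "(\<Sum>x<nv H. \<Sum>y<nv H. nm H x y * nm H y x) = 2 * s * s"
  proof -
    have "(\<Sum>x<nv H. \<Sum>y<nv H. nm H x y * nm H y x) = mytrace (Nmat H * Nmat H)" by (rule trace_nm[symmetric])
    also have "\<dots> = mytrace (Nmat G * Nmat G)"
      using trace_sq_charpoly[OF Nmat_carrier[of H] _ cp[symmetric]] Nmat_carrier[of G] nvs by simp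
    also have "\<dots> = 2 * s * s" using bip_trace[OF b] ss by (simp add: mult.assoc)
    finally show ?thesis .
  qed
  have ab0: "real ?a * real ?b > 0" using a0 b0 by (metis of_nat_0_less_iff mult_pos_pos)
  have s0: "s \<noteq> 0" unfolding s_def using real_sqrt_gt_zero[OF ab0] by (metis of_real_eq_0_iff less_irrefl)
  have sreal: "cnj s = s" unfolding s_def by simp
  have herm: "\<And>x y. x < nv H \<Longrightarrow> y < nv H \<Longrightarrow> nm H y x = cnj (nm H x y)" using nm_sym[OF mgH] by blast
  have form: "\<forall>x<nv H. \<forall>y<nv H. nm H x y = (s * u x / (\<Sum>x<nv H. u x * cnj (u x))) * cnj (u y) + (- s * v x / (\<Sum>x<nv H. v x * cnj (v x))) * cnj (v y)"
    using repr'[OF herm sreal s0 eu ev nu0 nv0 tr] by blast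
  show ?thesis unfolding minors_zero_def using D3_r2[OF form] by blast
qed




definition Kg :: "nat \<Rightarrow> (nat \<Rightarrow> bool) \<Rightarrow> mgraph" where
  "Kg n \<sigma> = \<lparr>nv = n, und = {(x,y). x < n \<and> y < n \<and> \<sigma> x \<noteq> \<sigma> y}, arc = {}\<rparr>"

lemma T6_nz: "z \<in> T6 \<Longrightarrow> z \<noteq> 0" using T6_unit by force
lemma T6_cnj_inv: "z \<in> T6 \<Longrightarrow> cnj z = inverse z"
  using T6_unit[of z] T6_nz[of z] by (simp add: field_simps)
lemma cnj_omega_inv: "cnj omega = inverse omega"
  using omega_mult_cnj by (simp add: field_simps)

lemma mg_und_iff: assumes "mixed_graph G" shows "(x,y) \<in> und G \<longleftrightarrow> x < nv G \<and> y < nv G \<and> nm G x y = 1"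
proof
  assume a: "(x,y) \<in> und G"
  then have "(x,y) \<notin> arc G" "(y,x) \<notin> arc G" "x < nv G" "y < nv G"
    using mg_und[OF assms a] mg_arc[OF assms, of x y] mg_arc[OF assms, of y x] by auto
  then show "x < nv G \<and> y < nv G \<and> nm G x y = 1" using a unfolding nm_def by simp
next
  assume "x < nv G \<and> y < nv G \<and> nm G x y = 1"
  then have "nm G x y = 1" by simp
  then show "(x,y) \<in> und G" unfolding nm_def
    using omega_ne1 cnj_omega_ne1 by (cases "(x,y) \<in> arc G"; cases "(y,x) \<in> arc G"; cases "(x,y) \<in> und G") simp_all
qed

lemma mg_arc_iff: assumes "mixed_graph G" shows "(x,y) \<in> arc G \<longleftrightarrow> x < nv G \<and> y < nv G \<and> nm G x y = omega"
proof
  assume a: "(x,y) \<in> arc G"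
  then show "x < nv G \<and> y < nv G \<and> nm G x y = omega" using mg_arc[OF assms a] unfolding nm_def by simp
next
  assume "x < nv G \<and> y < nv G \<and> nm G x y = omega"
  then have "nm G x y = omega" by simp
  then show "(x,y) \<in> arc G" unfolding nm_def
    using omega_ne1 omega_ne_cnj omega_ne0 by (cases "(x,y) \<in> arc G"; cases "(y,x) \<in> arc G"; cases "(x,y) \<in> und G") simp_all
qed


lemma omega_cases_facts:
  assumes a: "a \<in> T6" and b: "b \<in> T6"
  shows "b = cnj omega * a \<longleftrightarrow> a = omega * b"
    and "b = omega * a \<longleftrightarrow> a = cnj omega * b"
    and "a = omega * b \<Longrightarrow> b = - omega * a \<Longrightarrow> False"
    and "a = b \<Longrightarrow> a = omega * b \<Longrightarrow> False"
    and "a = cnj omega * b \<Longrightarrow> a = omega * b \<Longrightarrow> False"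
proof -
  have an: "a \<noteq> 0" and bn: "b \<noteq> 0" using T6_nz a b by auto
  show "b = cnj omega * a \<longleftrightarrow> a = omega * b"
  proof
    assume "b = cnj omega * a" then have "omega * b = (omega * cnj omega) * a" by (simp add: mult.assoc)
    then show "a = omega * b" by simp
  next
    assume "a = omega * b" then have "cnj omega * a = (cnj omega * omega) * b" by (simp add: mult.assoc)
    then show "b = cnj omega * a" by simp
  qed
  show "b = omega * a \<longleftrightarrow> a = cnj omega * b"
  proof
    assume "b = omega * a" then have "cnj omega * b = (cnj omega * omega) * a" by (simp add: mult.assoc)
    then show "a = cnj omega * b" by simp
  next
    assume "a = cnj omega * b" then have "omega * a = (omega * cnj omega) * b" by (simp add: mult.assoc)
    then show "b = omega * a" by simp
  qed
  show False if "a = omega * b" "b = - omega * a"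
  proof -
    have e1: "b = - omega * (omega * b)" using that(2)[unfolded that(1)] .
    have e2: "- omega * (omega * b) = cnj omega * b" by (simp add: mult.assoc[symmetric] omega_sq')
    have "b = cnj omega * b" using e1 e2 by simp
    then have "(1 - cnj omega) * b = 0" by (simp add: algebra_simps)
    then show False using bn cnj_omega_ne1 by simp
  qed
  show False if "a = b" "a = omega * b"
  proof -
    have "(1 - omega) * b = 0" using that by (simp add: algebra_simps)
    then show False using bn omega_ne1 by simp
  qed
  show False if "a = cnj omega * b" "a = omega * b"
  proof -
    have "(omega - cnj omega) * b = 0" using that by (simp add: algebra_simps)
    then show False using bn omega_ne_cnj by simp
  qed
qed

context fixes G \<sigma> p assumes mg: "mixed_graph G" and b: "bip G \<sigma> p"
begin

lemma nm_eq_iff: assumes "x < nv G" "y < nv G"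
  shows "nm G x y = c \<longleftrightarrow> (if \<sigma> x = \<sigma> y then c = 0 else p x = c * p y)"
proof -
  have px: "p x \<in> T6" and py: "p y \<in> T6" using bip_T6[OF b] assms by auto
  have "p x * cnj (p y) = c \<longleftrightarrow> p x = c * p y"
    using T6_unit[OF py] T6_nz[OF py] T6_cnj_inv[OF py] by (auto simp: field_simps)
  then show ?thesis using bip_nm[OF b assms] by auto
qed

lemma F_und: "(x,y) \<in> und G \<longleftrightarrow> x < nv G \<and> y < nv G \<and> \<sigma> x \<noteq> \<sigma> y \<and> p x = p y"
  using mg_und_iff[OF mg, of x y] nm_eq_iff[of x y 1] by (auto split: if_splits)

lemma F_arc: "(x,y) \<in> arc G \<longleftrightarrow> x < nv G \<and> y < nv G \<and> \<sigma> x \<noteq> \<sigma> y \<and> p x = omega * p y"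
  using mg_arc_iff[OF mg, of x y] nm_eq_iff[of x y omega] by (auto split: if_splits)

lemma F_diff: assumes "x < nv G" "y < nv G" "\<sigma> x \<noteq> \<sigma> y"
  shows "p x = p y \<or> p x = omega * p y \<or> p y = omega * p x"
proof -
  have "nm G x y \<noteq> 0" using nm_eq_iff[OF assms(1,2), of 0] assms T6_nz bip_T6[OF b] by auto
  then have "nm G x y \<in> E3" using nm_E3[OF mg] by blast
  then have "nm G x y = 1 \<or> nm G x y = omega \<or> nm G x y = cnj omega" unfolding E3_def by auto
  then have "p x = p y \<or> p x = omega * p y \<or> p x = cnj omega * p y"
    using nm_eq_iff[OF assms(1,2)] assms(3) by auto
  then show ?thesis using omega_cases_facts(2)[OF bip_T6[OF b assms(1)] bip_T6[OF b assms(2)]] by blast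
qed

lemma switch_to_K: "admissible G p" "three_way_switch G p = Kg (nv G) \<sigma>"
proof -
  have T: "\<forall>x<nv G. p x \<in> T6" using bip_T6[OF b] by blast
  show "admissible G p" unfolding admissible_def
  proof (intro conjI T ballI)
    fix e assume "e \<in> und G" then obtain x y where e: "e = (x,y)" "(x,y) \<in> und G" by (cases e) auto
    then show "case e of (x, y) \<Rightarrow> p y = p x \<or> p y = omega * p x \<or> p x = omega * p y"
      using F_und by auto
  next
    fix e assume "e \<in> arc G" then obtain x y where e: "e = (x,y)" "(x,y) \<in> arc G" by (cases e) auto
    then have "x < nv G" "y < nv G" "p x = omega * p y" using F_arc by auto
    then have "p y = cnj omega * p x" using omega_cases_facts(1) T by blast
    then show "case e of (x, y) \<Rightarrow> p y = p x \<or> p y = cnj omega * p x \<or> p y = - omega * p x"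
      using e by auto
  qed
  have Ukey: "(x,y) \<in> und (three_way_switch G p) \<longleftrightarrow> x < nv G \<and> y < nv G \<and> \<sigma> x \<noteq> \<sigma> y" for x y
  proof -
    show "(x,y) \<in> und (three_way_switch G p) \<longleftrightarrow> x < nv G \<and> y < nv G \<and> \<sigma> x \<noteq> \<sigma> y"
    proof
      assume "(x,y) \<in> und (three_way_switch G p)"
      then have "(x,y) \<in> und G \<or> (x,y) \<in> arc G \<or> (y,x) \<in> arc G" unfolding three_way_switch_def by auto
      then show "x < nv G \<and> y < nv G \<and> \<sigma> x \<noteq> \<sigma> y" using F_und F_arc by auto
    next
      assume a: "x < nv G \<and> y < nv G \<and> \<sigma> x \<noteq> \<sigma> y"
      then have c: "p x = p y \<or> p x = omega * p y \<or> p y = omega * p x" using F_diff by blast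
      have px: "p x \<in> T6" "p y \<in> T6" using a T by auto
      show "(x,y) \<in> und (three_way_switch G p)"
      proof (cases "p x = p y")
        case True then have "(x,y) \<in> und G" using a F_und by auto
        then show ?thesis using True unfolding three_way_switch_def by auto
      next
        case False
        show ?thesis
        proof (cases "p x = omega * p y")
          case True then have "(x,y) \<in> arc G" using a F_arc by auto
          moreover have "p y = cnj omega * p x" using True omega_cases_facts(1)[OF px] by blast
          ultimately show ?thesis unfolding three_way_switch_def by auto
        next
          case f2: False
          then have "p y = omega * p x" using c False by blast
          then have "(y,x) \<in> arc G" using a F_arc by auto
          moreover have "p x = cnj omega * p y" using \<open>p y = omega * p x\<close> omega_cases_facts(1)[OF px(2,1)] by blast
          ultimately show ?thesis unfolding three_way_switch_def by auto
        qed
      qed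
    qed
  qed
  have U: "und (three_way_switch G p) = {(x,y). x < nv G \<and> y < nv G \<and> \<sigma> x \<noteq> \<sigma> y}"
    using Ukey by auto
  have Akey: "(x,y) \<notin> arc (three_way_switch G p)" for x y
  proof
    assume "(x,y) \<in> arc (three_way_switch G p)"
    then have "((x,y) \<in> arc G \<and> p y = p x) \<or> ((x,y) \<in> und G \<and> p y = omega * p x) \<or> ((y,x) \<in> arc G \<and> p x = - omega * p y)"
      unfolding three_way_switch_def by auto
    then show False
    proof (elim disjE conjE)
      assume "(x,y) \<in> arc G" "p y = p x"
      then show False using F_arc omega_cases_facts(4) T by metis
    next
      assume "(x,y) \<in> und G" "p y = omega * p x"
      then show False using F_und omega_cases_facts(4) T by metis
    next
      assume "(y,x) \<in> arc G" "p x = - omega * p y"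
      then show False using F_arc omega_cases_facts(3) T by metis
    qed
  qed
  have A: "arc (three_way_switch G p) = {}" using Akey by auto
  show "three_way_switch G p = Kg (nv G) \<sigma>"
    using U A unfolding Kg_def by (simp add: three_way_switch_def)
qed


lemma switch_from_K: "admissible (Kg (nv G) \<sigma>) (\<lambda>x. cnj (p x))" "three_way_switch (Kg (nv G) \<sigma>) (\<lambda>x. cnj (p x)) = G"
proof -
  have T: "\<forall>x<nv G. p x \<in> T6" using bip_T6[OF b] by blast
  have Tq: "\<forall>x<nv G. cnj (p x) \<in> T6" using T T6_cnj by blast
  show "admissible (Kg (nv G) \<sigma>) (\<lambda>x. cnj (p x))" unfolding admissible_def
  proof (intro conjI ballI)
    show "\<forall>x<nv (Kg (nv G) \<sigma>). cnj (p x) \<in> T6" using Tq unfolding Kg_def by simp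
  next
    fix e assume "e \<in> und (Kg (nv G) \<sigma>)"
    then obtain x y where e: "e = (x,y)" "x < nv G" "y < nv G" "\<sigma> x \<noteq> \<sigma> y" unfolding Kg_def by auto
    have q: "cnj (p x) \<in> T6" "cnj (p y) \<in> T6" using Tq e by auto
    have "p x = p y \<or> p x = omega * p y \<or> p y = omega * p x" using F_diff e by blast
    then have "cnj (p x) = cnj (p y) \<or> cnj (p x) = cnj omega * cnj (p y) \<or> cnj (p y) = cnj omega * cnj (p x)"
      by auto
    then have "cnj (p y) = cnj (p x) \<or> cnj (p y) = omega * cnj (p x) \<or> cnj (p x) = omega * cnj (p y)"
      using omega_cases_facts(1)[OF q] omega_cases_facts(2)[OF q] by metis
    then show "case e of (x, y) \<Rightarrow> cnj (p y) = cnj (p x) \<or> cnj (p y) = omega * cnj (p x) \<or> cnj (p x) = omega * cnj (p y)"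
      using e by simp
  next
    fix e assume "e \<in> arc (Kg (nv G) \<sigma>)"
    then show "case e of (x, y) \<Rightarrow> cnj (p y) = cnj (p x) \<or> cnj (p y) = cnj omega * cnj (p x) \<or> cnj (p y) = - omega * cnj (p x)"
      unfolding Kg_def by simp
  qed
  have Ukey: "(x,y) \<in> und (three_way_switch (Kg (nv G) \<sigma>) (\<lambda>x. cnj (p x))) \<longleftrightarrow> (x,y) \<in> und G" for x y
    unfolding three_way_switch_def Kg_def F_und by auto
  have Akey: "(x,y) \<in> arc (three_way_switch (Kg (nv G) \<sigma>) (\<lambda>x. cnj (p x))) \<longleftrightarrow> (x,y) \<in> arc G" for x y
  proof -
    have "(x,y) \<in> arc (three_way_switch (Kg (nv G) \<sigma>) (\<lambda>x. cnj (p x))) \<longleftrightarrow>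
       x < nv G \<and> y < nv G \<and> \<sigma> x \<noteq> \<sigma> y \<and> cnj (p y) = omega * cnj (p x)"
      unfolding three_way_switch_def Kg_def by auto
    also have "\<dots> \<longleftrightarrow> x < nv G \<and> y < nv G \<and> \<sigma> x \<noteq> \<sigma> y \<and> p x = omega * p y"
    proof (cases "x < nv G \<and> y < nv G")
      case True
      have "cnj (p y) = omega * cnj (p x) \<longleftrightarrow> p y = cnj omega * p x"
        by (metis complex_cnj_cnj complex_cnj_mult)
      also have "\<dots> \<longleftrightarrow> p x = omega * p y" using omega_cases_facts(1) T True by blast
      finally show ?thesis by blast
    qed auto
    also have "\<dots> \<longleftrightarrow> (x,y) \<in> arc G" using F_arc by blast
    finally show ?thesis .
  qed
  show "three_way_switch (Kg (nv G) \<sigma>) (\<lambda>x. cnj (p x)) = G"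
  proof (rule mgraph.equality)
    show "nv (three_way_switch (Kg (nv G) \<sigma>) (\<lambda>x. cnj (p x))) = nv G" unfolding three_way_switch_def Kg_def by simp
    show "und (three_way_switch (Kg (nv G) \<sigma>) (\<lambda>x. cnj (p x))) = und G" using Ukey by auto
    show "arc (three_way_switch (Kg (nv G) \<sigma>) (\<lambda>x. cnj (p x))) = arc G" using Akey by auto
  qed simp
qed

end




lemma card_part: "card {x. x < n \<and> \<sigma> x} + card {x. x < n \<and> \<not> \<sigma> x} = (n::nat)"
proof -
  have "{x. x < n \<and> \<sigma> x} \<union> {x. x < n \<and> \<not> \<sigma> x} = {..<n}" by auto
  moreover have "card ({x. x < n \<and> \<sigma> x} \<union> {x. x < n \<and> \<not> \<sigma> x}) = card {x. x < n \<and> \<sigma> x} + card {x. x < n \<and> \<not> \<sigma> x}"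
    by (rule card_Un_disjoint) auto
  ultimately show ?thesis by simp
qed

lemma Kg_neg: "Kg n (\<lambda>x. \<not> \<sigma> x) = Kg n \<sigma>"
  unfolding Kg_def by auto

lemma Kg_iso: assumes c: "card {x. x < n \<and> \<sigma> x} = card {x. x < n \<and> \<tau> x}"
  shows "isomorphic_mg (Kg n \<sigma>) (Kg n \<tau>)"
proof -
  let ?A = "{x. x < n \<and> \<sigma> x}" and ?A' = "{x. x < n \<and> \<tau> x}"
  let ?B = "{x. x < n \<and> \<not> \<sigma> x}" and ?B' = "{x. x < n \<and> \<not> \<tau> x}"
  have cB: "card ?B = card ?B'" using c card_part[of n \<sigma>] card_part[of n \<tau>] by simp
  obtain g where g: "bij_betw g ?A ?A'" using finite_same_card_bij[OF _ _ c] by auto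
  obtain h where h: "bij_betw h ?B ?B'" using finite_same_card_bij[OF _ _ cB] by auto
  define f where "f x = (if \<sigma> x then g x else h x)" for x
  have "bij_betw f ?A ?A' = bij_betw g ?A ?A'" by (rule bij_betw_cong) (simp add: f_def)
  then have fA: "bij_betw f ?A ?A'" using g by simp
  have "bij_betw f ?B ?B' = bij_betw h ?B ?B'" by (rule bij_betw_cong) (simp add: f_def)
  then have fB: "bij_betw f ?B ?B'" using h by simp
  have "bij_betw f (?A \<union> ?B) (?A' \<union> ?B')" by (rule bij_betw_combine[OF fA fB]) auto
  moreover have "?A \<union> ?B = {..<n}" "?A' \<union> ?B' = {..<n}" by auto
  ultimately have f: "bij_betw f {..<n} {..<n}" by simp
  have ft: "f x < n \<and> \<tau> (f x) = \<sigma> x" if "x < n" for x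
  proof (cases "\<sigma> x")
    case True then have "x \<in> ?A" using that by auto
    then have "f x \<in> ?A'" using fA bij_betwE by blast
    then show ?thesis using True by auto
  next
    case False then have "x \<in> ?B" using that by auto
    then have "f x \<in> ?B'" using fB bij_betwE by blast
    then show ?thesis using False by auto
  qed
  show ?thesis unfolding isomorphic_mg_def
  proof (intro conjI exI[of _ f])
    show "nv (Kg n \<sigma>) = nv (Kg n \<tau>)" unfolding Kg_def by simp
    show "bij_betw f {..<nv (Kg n \<sigma>)} {..<nv (Kg n \<tau>)}" using f unfolding Kg_def by simp
    show "\<forall>x<nv (Kg n \<sigma>). \<forall>y<nv (Kg n \<sigma>). ((x, y) \<in> und (Kg n \<sigma>)) = ((f x, f y) \<in> und (Kg n \<tau>)) \<and>
        ((x, y) \<in> arc (Kg n \<sigma>)) = ((f x, f y) \<in> arc (Kg n \<tau>))"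
    proof (intro allI impI)
      fix x y assume xy: "x < nv (Kg n \<sigma>)" "y < nv (Kg n \<sigma>)"
      then have xy': "x < n" "y < n" unfolding Kg_def by auto
      show "((x, y) \<in> und (Kg n \<sigma>)) = ((f x, f y) \<in> und (Kg n \<tau>)) \<and>
        ((x, y) \<in> arc (Kg n \<sigma>)) = ((f x, f y) \<in> arc (Kg n \<tau>))"
        using ft[OF xy'(1)] ft[OF xy'(2)] xy' unfolding Kg_def by simp
    qed
  qed
qed

lemma bip_sides:
  assumes mg: "mixed_graph G" and conn: "connected_mg G" and n2: "2 \<le> nv G" and b: "bip G \<sigma> p"
  shows "card {x. x < nv G \<and> \<sigma> x} > 0" "card {x. x < nv G \<and> \<not> \<sigma> x} > 0"
proof -
  have n01: "0 < nv G" "1 < nv G" using n2 by auto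
  have "(underlying_adj G)\<^sup>*\<^sup>* 0 1" using conn n01 unfolding connected_mg_def by blast
  then obtain t where t: "underlying_adj G 0 t"
  proof (cases rule: converse_rtranclpE)
    case base then show ?thesis by simp
  next
    case (step y) then show ?thesis using that by blast
  qed
  have r: "0 < nv G" "t < nv G" using adj_range[OF mg t] by auto
  have "nm G 0 t \<noteq> 0" using t nm_adj[OF mg] by blast
  then have d: "\<sigma> 0 \<noteq> \<sigma> t" using bip_nm[OF b r] by (cases "\<sigma> 0 = \<sigma> t") simp_all
  have m1: "(if \<sigma> 0 then 0 else t) \<in> {x. x < nv G \<and> \<sigma> x}" using d r by auto
  have m2: "(if \<sigma> 0 then t else 0) \<in> {x. x < nv G \<and> \<not> \<sigma> x}" using d r by auto
  have f1: "finite {x. x < nv G \<and> \<sigma> x}" "finite {x. x < nv G \<and> \<not> \<sigma> x}" by auto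
  show "card {x. x < nv G \<and> \<sigma> x} > 0" using m1 f1(1) card_gt_0_iff by blast
  show "card {x. x < nv G \<and> \<not> \<sigma> x} > 0" using m2 f1(2) card_gt_0_iff by blast
qed

lemma nat_pair: assumes "a + b = (n::nat)" "a' + b' = n" "a * b = a' * b'"
  shows "a' = a \<or> a' = b"
proof -
  have e1: "int a + int b = int n" "int a' + int b' = int n" "int a * int b = int a' * int b'"
    using assms by (simp_all flip: of_nat_add of_nat_mult)
  have "(int a - int a') * (int a - int b') = int a * int a - int a * (int a' + int b') + int a' * int b'"
    by (simp add: algebra_simps)
  also have "\<dots> = int a * int a - int a * int n + int a * int b" using e1 by simp
  also have "\<dots> = int a * (int a + int b - int n)" by (simp add: algebra_simps)
  also have "\<dots> = 0" using e1 by simp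
  finally have "a = a' \<or> a = b'" by simp
  then show ?thesis using assms by auto
qed




theorem theorem5p10:
  fixes G H :: mgraph
  assumes "mixed_graph G" and "connected_mg G" and "rank_N G = 2"
    and "mixed_graph H" and "connected_mg H" and "cospectral G H"
  shows "switching_equivalent G H"
proof -
  note mgG = assms(1) and connG = assms(2) and mgH = assms(4) and connH = assms(5)
  have "rank_N G \<le> nv G" unfolding rank_N_def by (rule vec_space.rank_le_nc[OF Nmat_carrier])
  then have n2: "2 \<le> nv G" using assms(3) by simp
  have mzG: "minors_zero G" by (rule rank2_minors[OF assms(3)])
  obtain \<sigma> p where bG: "bip G \<sigma> p"
    using bip_structure[OF mgG mzG connG n2] unfolding bip_def by blast
  have nvs: "nv G = nv H" and cp: "char_poly (Nmat G) = char_poly (Nmat H)"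
    using cospectral_charpoly[OF assms(6)] by auto
  have sG: "card {x. x < nv G \<and> \<sigma> x} > 0" "card {x. x < nv G \<and> \<not> \<sigma> x} > 0"
    using bip_sides[OF mgG connG n2 bG] by auto
  have mzH: "minors_zero H"
    by (rule H_minors[OF mgH nvs[symmetric] cp bG]) (use sG in auto)
  have n2H: "2 \<le> nv H" using n2 nvs by simp
  obtain \<tau> q where bH: "bip H \<tau> q"
    using bip_structure[OF mgH mzH connH n2H] unfolding bip_def by blast
  let ?n = "nv G"
  let ?a = "card {x. x < ?n \<and> \<sigma> x}" and ?b = "card {x. x < ?n \<and> \<not> \<sigma> x}"
  let ?a' = "card {x. x < ?n \<and> \<tau> x}" and ?b' = "card {x. x < ?n \<and> \<not> \<tau> x}"
  have trG: "mytrace (Nmat G * Nmat G) = 2 * of_nat ?a * of_nat ?b" using bip_trace[OF bG] by simp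
  have trH: "mytrace (Nmat H * Nmat H) = 2 * of_nat ?a' * of_nat ?b'" using bip_trace[OF bH] nvs by simp
  have "mytrace (Nmat G * Nmat G) = mytrace (Nmat H * Nmat H)"
    using trace_sq_charpoly[OF Nmat_carrier[of G] _ cp] Nmat_carrier[of H] nvs by simp
  then have "(2::complex) * of_nat (?a * ?b) = 2 * of_nat (?a' * ?b')" using trG trH by (simp add: mult.assoc)
  then have "(of_nat (?a * ?b) :: complex) = of_nat (?a' * ?b')" by simp
  then have ab: "?a * ?b = ?a' * ?b'" by (simp only: of_nat_eq_iff)
  have "?a' = ?a \<or> ?a' = ?b" by (rule nat_pair[OF card_part card_part ab])
  then have iso: "isomorphic_mg (Kg ?n \<sigma>) (Kg ?n \<tau>)"
  proof
    assume e: "?a' = ?a" show ?thesis by (rule Kg_iso) (use e in simp)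
  next
    assume "?a' = ?b"
    then have "isomorphic_mg (Kg ?n (\<lambda>x. \<not> \<sigma> x)) (Kg ?n \<tau>)" by (intro Kg_iso) simp
    then show ?thesis unfolding Kg_neg .
  qed
  have s1: "switch_step G (Kg ?n \<sigma>)"
    unfolding switch_step_def using switch_to_K[OF mgG bG] by (intro disjI2 disjI1 exI[of _ p]) simp
  have s2: "switch_step (Kg ?n \<sigma>) (Kg ?n \<tau>)" unfolding switch_step_def using iso by blast
  have s3: "switch_step (Kg ?n \<tau>) H"
    unfolding switch_step_def using switch_from_K[OF mgH bH] nvs by (intro disjI2 disjI1 exI[of _ "\<lambda>x. cnj (q x)"]) simp
  show ?thesis unfolding switching_equivalent_def
    by (rule rtranclp.rtrancl_into_rtrancl[OF rtranclp.rtrancl_into_rtrancl[OF r_into_rtranclp[where r=switch_step, OF s1] s2] s3])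
qed


end
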